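(* (i) $\mathbf{co}<_{\mathrm{Learn}}\mathbf{nUs}$ and $\mathbf{co}<^{\mathrm{fin}}_{\mathrm{Learn}}\mathbf{nUs}$; (ii) $\mathbf{nUs}<_{\mathrm{Learn}}E_{range}$ and $\mathbf{nUs}\equiv^{\mathrm{fin}}_{\mathrm{Learn}}E_{range}$; (iii) $\mathbf{nUs}<^{\mathrm{fin}}_{\mathrm{Learn}}\mathbf{Ex}$, and in particular $\mathbf{nUs}<_{\mathrm{Learn}}\mathbf{Ex}$.
   Context: All structures are countable, have domain $\mathbb{N}$, are in a finite relational signature, and are identified with their atomic diagrams (elements of $2^{\mathbb{N}}$). A family of structures $\mathfrak{K}$ is a countable set of pairwise nonisomorphic such structures. $\mathcal{S}\restriction_s$ is the finite substructure on $\{0,\dots,s\}$. $\mathrm{LD}(\mathfrak{K})\subseteq2^{\mathbb{N}}$ is the set of structures with domain $\mathbb{N}$ isomorphic to a member of $\mathfrak{K}$ (subspace topology). The hypothesis space is $\{\ulcorner\mathcal{A}\urcorner:\mathcal{A}\in\mathfrak{K}\}\cup\{?\}$; a learner is an arbitrary function from $\{\mathcal{S}\restriction_s:\mathcal{S}\in\mathrm{LD}(\mathfrak{K})\}$ to the hypothesis space. $\mathbf{Ex}$-learnable: some learner $\mathbf{M}$ such that for each $\mathcal{S}\in\mathrm{LD}(\mathfrak{K})$, $\mathbf{M}(\mathcal{S}\restriction_n)$ is eventually constantly $\ulcorner\mathcal{A}\urcorner$ where $\mathcal{A}\cong\mathcal{S}$. $\mathbf{nUs}$-learnable: some learner $\mathbf{Ex}$-learning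 $\mathfrak{K}$ such that, on each $\mathcal{S}\cong\mathcal{A}$, once it first outputs $\ulcorner\mathcal{A}\urcorner$ it outputs $\ulcorner\mathcal{A}\urcorner$ at all later stages. $\mathbf{co}$-learnable: some learner $\mathbf{M}$ such that for each $\mathcal{S}\in\mathrm{LD}(\mathfrak{K})$, $\{\mathbf{M}(\mathcal{S}\restriction_s):s\}\setminus\{?\}=\{\ulcorner\mathcal{B}\urcorner:\mathcal{B}\in\mathfrak{K},\mathcal{B}\neq\mathcal{A}\}$ where $\mathcal{A}\cong\mathcal{S}$. For an equivalence relation $E$ on a space $X$, $\mathfrak{K}$ is $E$-learnable if there is a continuous $\Gamma:\mathrm{LD}(\mathfrak{K})\to X$ with $\mathcal{S}\cong\mathcal{S}'\iff\Gamma(\mathcal{S})E\Gamma(\mathcal{S}')$ on $\mathrm{LD}(\mathfrak{K})$. $E_{range}$ on $\mathbb{N}^{\mathbb{N}}$: $p\,E_{range}\,q\iff\{p(m):m\}=\{q(m):m\}$. For criteria $X,Y$: $X\leq_{\mathrm{Learn}}Y$ iff every $X$-learnable family is $Y$-learnable; $X\leq^{\mathrm{fin}}_{\mathrm{Learn}}Y$ iff every finite $X$-learnable family is $Y$-learnable; $<$ means $\leq$ but not $\geq$; $\equiv$ means both $\leq$ and $\geq$. *)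

theory Defs
  imports "HOL-Analysis.Analysis"
begin

text \<open>A countable structure with domain nat in a finite relational signature.
  A signature is a list of arities; relation symbol i (i < length sig) has arity sig ! i.
  A structure is given by its relations: R i xs holds iff the tuple xs is in the
  i-th relation. This is (up to a recursive recoding) the atomic diagram, and the
  product topology on nat \<Rightarrow> nat list \<Rightarrow> bool (bool discrete) is the
  Cantor-space topology on atomic diagrams.\<close>

type_synonym struc = "nat \<Rightarrow> nat list \<Rightarrow> bool"

definition wf_struc :: "nat list \<Rightarrow> struc \<Rightarrow> bool" where
  "wf_struc sig S \<longleftrightarrow> (\<forall>i xs. S i xs \<longrightarrow> i < length sig \<and> length xs = sig ! i)"

definition iso :: "struc \<Rightarrow> struc \<Rightarrow> bool" where
  "iso S T \<longleftrightarrow> (\<exists>f. bij f \<and> (\<forall>i xs. S i xs \<longleftrightarrow> T i (map f xs)))"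

text \<open>Finite substructure on {0,...,s}; the learner sees the pair (s, S restricted).\<close>
definition restr :: "nat \<Rightarrow> struc \<Rightarrow> nat \<times> struc" where
  "restr s S = (s, (\<lambda>i xs. (\<forall>x\<in>set xs. x \<le> s) \<and> S i xs))"

definition family :: "nat list \<Rightarrow> struc set \<Rightarrow> bool" where
  "family sig K \<longleftrightarrow> countable K \<and> (\<forall>A\<in>K. wf_struc sig A)
      \<and> (\<forall>A\<in>K. \<forall>B\<in>K. iso A B \<longrightarrow> A = B)"

definition LD :: "nat list \<Rightarrow> struc set \<Rightarrow> struc set" where
  "LD sig K = {S. wf_struc sig S \<and> (\<exists>A\<in>K. iso S A)}"

text \<open>Hypotheses: Some A stands for the name of A \<in> K, None for '?'.\<close>
type_synonym learner = "nat \<times> struc \<Rightarrow> struc option"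

definition is_learner :: "nat list \<Rightarrow> struc set \<Rightarrow> learner \<Rightarrow> bool" where
  "is_learner sig K M \<longleftrightarrow> (\<forall>S\<in>LD sig K. \<forall>s. M (restr s S) \<in> Some ` K \<union> {None})"

definition Ex_learns :: "nat list \<Rightarrow> struc set \<Rightarrow> learner \<Rightarrow> bool" where
  "Ex_learns sig K M \<longleftrightarrow> is_learner sig K M \<and>
     (\<forall>S\<in>LD sig K. \<exists>A\<in>K. iso S A \<and> (\<forall>\<^sub>F n in sequentially. M (restr n S) = Some A))"

definition Ex_learnable :: "nat list \<Rightarrow> struc set \<Rightarrow> bool" where
  "Ex_learnable sig K \<longleftrightarrow> (\<exists>M. Ex_learns sig K M)"

definition nUs_learnable :: "nat list \<Rightarrow> struc set \<Rightarrow> bool" where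
  "nUs_learnable sig K \<longleftrightarrow> (\<exists>M. Ex_learns sig K M \<and>
     (\<forall>S\<in>LD sig K. \<forall>A\<in>K. iso S A \<longrightarrow>
        (\<forall>n m. n \<le> m \<longrightarrow> M (restr n S) = Some A \<longrightarrow> M (restr m S) = Some A)))"

definition co_learnable :: "nat list \<Rightarrow> struc set \<Rightarrow> bool" where
  "co_learnable sig K \<longleftrightarrow> (\<exists>M. is_learner sig K M \<and>
     (\<forall>S\<in>LD sig K. \<forall>A\<in>K. iso S A \<longrightarrow>
        range (\<lambda>s. M (restr s S)) - {None} = Some ` (K - {A})))"

definition E_learnable :: "('x::topological_space \<Rightarrow> 'x \<Rightarrow> bool) \<Rightarrow> nat list \<Rightarrow> struc set \<Rightarrow> bool" where
  "E_learnable E sig K \<longleftrightarrow> (\<exists>\<Gamma> :: struc \<Rightarrow> 'x. continuous_on (LD sig K) \<Gamma> \<and>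
     (\<forall>S\<in>LD sig K. \<forall>T\<in>LD sig K. iso S T \<longleftrightarrow> E (\<Gamma> S) (\<Gamma> T)))"

definition E_range :: "(nat \<Rightarrow> nat) \<Rightarrow> (nat \<Rightarrow> nat) \<Rightarrow> bool" where
  "E_range p q \<longleftrightarrow> range p = range q"

definition Erange_learnable :: "nat list \<Rightarrow> struc set \<Rightarrow> bool" where
  "Erange_learnable = E_learnable E_range"

type_synonym criterion = "nat list \<Rightarrow> struc set \<Rightarrow> bool"

definition learn_le :: "criterion \<Rightarrow> criterion \<Rightarrow> bool" where
  "learn_le X Y \<longleftrightarrow> (\<forall>sig K. family sig K \<longrightarrow> X sig K \<longrightarrow> Y sig K)"

definition learn_le_fin :: "criterion \<Rightarrow> criterion \<Rightarrow> bool" where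
  "learn_le_fin X Y \<longleftrightarrow> (\<forall>sig K. family sig K \<longrightarrow> finite K \<longrightarrow> X sig K \<longrightarrow> Y sig K)"

definition learn_lt :: "criterion \<Rightarrow> criterion \<Rightarrow> bool" where
  "learn_lt X Y \<longleftrightarrow> learn_le X Y \<and> \<not> learn_le Y X"

definition learn_lt_fin :: "criterion \<Rightarrow> criterion \<Rightarrow> bool" where
  "learn_lt_fin X Y \<longleftrightarrow> learn_le_fin X Y \<and> \<not> learn_le_fin Y X"

definition learn_eq_fin :: "criterion \<Rightarrow> criterion \<Rightarrow> bool" where
  "learn_eq_fin X Y \<longleftrightarrow> learn_le_fin X Y \<and> learn_le_fin Y X"

end

theory Submission
  imports Defs "HOL-Library.Infinite_Set"
begin


lemma restr_snd: "snd (restr m S) = (\<lambda>i xs. (\<forall>x\<in>set xs. x \<le> m) \<and> S i xs)"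
  by (simp add: restr_def)

lemma fst_restr[simp]: "fst (restr s S) = s" by (simp add: restr_def)

lemma restr_restr: "n \<le> m \<Longrightarrow> restr n (snd (restr m S)) = restr n S"
  unfolding restr_def by (auto intro!: ext)

lemma restr_eq_mono: "n \<le> m \<Longrightarrow> restr m S = restr m T \<Longrightarrow> restr n S = restr n T"
  by (metis restr_restr)

lemma restr_eqD: assumes "restr k S = restr k T" "\<forall>x\<in>set xs. x \<le> k" shows "S i xs = T i xs"
proof -
  have "snd (restr k S) i xs = snd (restr k T) i xs" using assms(1) by simp
  then show ?thesis using assms(2) by (simp add: restr_def)
qed

lemma restr_eqI: "(\<And>i xs. \<forall>x\<in>set xs. x \<le> k \<Longrightarrow> S i xs = T i xs) \<Longrightarrow> restr k S = restr k T"
  unfolding restr_def by (auto intro!: ext)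

lemma iso_refl: "iso S S"
  unfolding iso_def by (rule exI[of _ id]) auto

lemma iso_sym: assumes "iso S T" shows "iso T S"
proof -
  obtain f where f0: "bij f" "\<forall>i xs. S i xs \<longleftrightarrow> T i (map f xs)" using assms(1) unfolding iso_def by blast
  note f = f0(1) f0(2)[rule_format]
  have m: "map f (map (inv f) xs) = xs" for xs
    using bij_is_surj[OF f(1)] by (induct xs) (auto simp: surj_f_inv_f)
  have "\<And>i xs. T i xs \<longleftrightarrow> S i (map (inv f) xs)"
  proof -
    fix i xs
    have "S i (map (inv f) xs) \<longleftrightarrow> T i (map f (map (inv f) xs))" by (rule f(2))
    then show "T i xs \<longleftrightarrow> S i (map (inv f) xs)" by (simp only: m)
  qed
  moreover have "bij (inv f)" using f bij_imp_bij_inv by blast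
  ultimately show ?thesis unfolding iso_def by blast
qed

lemma iso_trans: assumes "iso S T" "iso T U" shows "iso S U"
proof -
  obtain f where f0: "bij f" "\<forall>i xs. S i xs \<longleftrightarrow> T i (map f xs)" using assms(1) unfolding iso_def by blast
  note f = f0(1) f0(2)[rule_format]
  obtain g where g0: "bij g" "\<forall>i xs. T i xs \<longleftrightarrow> U i (map g xs)" using assms(2) unfolding iso_def by blast
  note g = g0(1) g0(2)[rule_format]
  have "bij (g \<circ> f)" using f g bij_comp by blast
  moreover have "\<And>i xs. S i xs \<longleftrightarrow> U i (map (g \<circ> f) xs)" using f g by simp
  ultimately show ?thesis unfolding iso_def by blast
qed

lemma iso_wf: assumes "iso S A" "wf_struc sig A" shows "wf_struc sig S"
proof -
  obtain f where f0: "\<forall>i xs. S i xs \<longleftrightarrow> A i (map f xs)" using assms(1) unfolding iso_def by blast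
  note f = f0[rule_format]
  show ?thesis using assms(2) unfolding wf_struc_def f by (metis length_map)
qed

lemma family_LD: "family sig K \<Longrightarrow> A \<in> K \<Longrightarrow> A \<in> LD sig K"
  unfolding family_def LD_def by (auto intro!: bexI[of _ A] iso_refl)

lemma LD_iso: "family sig K \<Longrightarrow> A \<in> K \<Longrightarrow> iso S A \<Longrightarrow> S \<in> LD sig K"
  unfolding family_def LD_def by (auto intro!: bexI[of _ A] iso_wf[of S A])

lemma family_uniq: assumes "family sig K" "A \<in> K" "B \<in> K" "iso S A" "iso S B" shows "A = B"
proof -
  have "iso A B" using iso_trans[OF iso_sym[OF assms(4)] assms(5)] .
  then show ?thesis using assms(1-3) unfolding family_def by blast
qed

lemma Ex_learnsD:
  assumes "Ex_learns sig K M" "family sig K" "A \<in> K" "iso S A"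
  shows "\<forall>\<^sub>F n in sequentially. M (restr n S) = Some A"
proof -
  have "S \<in> LD sig K" using LD_iso assms by blast
  then obtain B where "B \<in> K" "iso S B" "\<forall>\<^sub>F n in sequentially. M (restr n S) = Some B"
    using assms(1) unfolding Ex_learns_def by blast
  moreover have "B = A" using family_uniq assms calculation by blast
  ultimately show ?thesis by simp
qed

lemma bij_betw_infinite_nat:
  fixes A B :: "nat set" assumes "infinite A" "infinite B" shows "\<exists>e. bij_betw e A B"
proof -
  have a: "bij_betw (enumerate A) UNIV A" using assms bij_enumerate by blast
  have b: "bij_betw (enumerate B) UNIV B" using assms bij_enumerate by blast
  have "bij_betw (enumerate B \<circ> inv_into UNIV (enumerate A)) A B"
    using bij_betw_trans[OF bij_betw_inv_into[OF a] b] .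
  then show ?thesis by blast
qed

lemma bij_combine:
  fixes P Q :: "nat set"
  assumes "bij_betw g P Q" "bij_betw e (-P) (-Q)"
  shows "\<exists>f. bij f \<and> (\<forall>x. x \<in> P \<longleftrightarrow> f x \<in> Q)"
proof -
  define f where "f x = (if x \<in> P then g x else e x)" for x
  have 1: "bij_betw f P Q" using assms(1) by (rule bij_betw_cong[THEN iffD1, rotated]) (simp add: f_def)
  have 2: "bij_betw f (-P) (-Q)" using assms(2) by (rule bij_betw_cong[THEN iffD1, rotated]) (simp add: f_def)
  have "bij_betw f (P \<union> -P) (Q \<union> -Q)" by (rule bij_betw_combine[OF 1 2]) auto
  then have "bij f" by simp
  moreover have "x \<in> P \<longleftrightarrow> f x \<in> Q" for x
    using 1 2 by (cases "x \<in> P") (auto simp: bij_betw_def)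
  ultimately show ?thesis by blast
qed

lemma extend_bij:
  fixes h :: "nat \<Rightarrow> nat"
  assumes "finite F" "inj_on h F"
  shows "\<exists>g. bij g \<and> (\<forall>x\<in>F. g x = h x)"
proof -
  have "infinite (-F)" using assms(1) by (simp add: Finite_Set.finite_compl)
  moreover have "infinite (- h ` F)" using assms(1) by (simp add: Finite_Set.finite_compl)
  ultimately obtain e where e: "bij_betw e (-F) (- h ` F)" using bij_betw_infinite_nat by blast
  define g where "g x = (if x \<in> F then h x else e x)" for x
  have 1: "bij_betw g F (h ` F)" using assms(2) by (simp add: bij_betw_imageI bij_betw_cong g_def)
  have 2: "bij_betw g (-F) (- h ` F)" using e by (rule bij_betw_cong[THEN iffD1, rotated]) (simp add: g_def)
  have "bij_betw g (F \<union> -F) (h ` F \<union> - h ` F)" by (rule bij_betw_combine[OF 1 2]) auto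
  then show ?thesis unfolding g_def by auto
qed


lemma open_fun_nbhd:
  fixes U :: "('a \<Rightarrow> 'b::topological_space) set"
  assumes "open U" "g \<in> U"
  shows "\<exists>F V. finite F \<and> (\<forall>a\<in>F. open (V a) \<and> g a \<in> V a) \<and> (\<forall>h. (\<forall>a\<in>F. h a \<in> V a) \<longrightarrow> h \<in> U)"
proof -
  from assms have "openin (product_topology (\<lambda>i. euclidean) UNIV) U" by (simp add: open_fun_def)
  from product_topology_open_contains_basis[OF this assms(2)] obtain X where
    X: "g \<in> Pi\<^sub>E UNIV X" "\<forall>i. openin euclidean (X i)" "finite {i. X i \<noteq> topspace euclidean}"
      "Pi\<^sub>E UNIV X \<subseteq> U" by blast
  have 1: "finite {i. X i \<noteq> UNIV}" using X(3) by simp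
  have 2: "\<forall>a\<in>{i. X i \<noteq> UNIV}. open (X a) \<and> g a \<in> X a" using X(1,2) by (auto simp: PiE_iff)
  have 3: "\<forall>h. (\<forall>a\<in>{i. X i \<noteq> UNIV}. h a \<in> X a) \<longrightarrow> h \<in> U"
  proof (intro allI impI)
    fix h assume h: "\<forall>a\<in>{i. X i \<noteq> UNIV}. h a \<in> X a"
    have "h \<in> Pi\<^sub>E UNIV X" unfolding PiE_iff using h by auto
    then show "h \<in> U" using X(4) by blast
  qed
  show ?thesis using 1 2 3 by blast
qed

lemma open_fun_nbhd_discrete:
  fixes U :: "('a \<Rightarrow> 'b::discrete_topology) set"
  assumes "open U" "g \<in> U"
  shows "\<exists>F. finite F \<and> (\<forall>h. (\<forall>a\<in>F. h a = g a) \<longrightarrow> h \<in> U)"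
proof -
  obtain F V where "finite F" "\<forall>a\<in>F. open (V a) \<and> g a \<in> V a" "\<forall>h. (\<forall>a\<in>F. h a \<in> V a) \<longrightarrow> h \<in> U"
    using open_fun_nbhd[OF assms] by blast
  then show ?thesis by (metis (no_types, lifting))
qed

lemma cyl:
  fixes U :: "struc set"
  assumes "open U" "S \<in> U"
  shows "\<exists>k. \<forall>T. restr k T = restr k S \<longrightarrow> T \<in> U"
proof -
  obtain F V where F: "finite F" "\<forall>a\<in>F. open (V a) \<and> S a \<in> V a" "\<forall>h. (\<forall>a\<in>F. h a \<in> V a) \<longrightarrow> h \<in> U"
    using open_fun_nbhd[OF assms] by blast
  have "\<forall>a\<in>F. \<exists>G. finite G \<and> (\<forall>h. (\<forall>b\<in>G. h b = S a b) \<longrightarrow> h \<in> V a)"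
    using F(2) open_fun_nbhd_discrete by blast
  then obtain G where G: "\<forall>a\<in>F. finite (G a) \<and> (\<forall>h. (\<forall>b\<in>G a. h b = S a b) \<longrightarrow> h \<in> V a)"
    by metis
  define E where "E = (\<Union>a\<in>F. \<Union>xs\<in>G a. set xs)"
  have fE: "finite E" unfolding E_def using F(1) G by auto
  define k where "k = Max (insert 0 E)"
  have kE: "x \<in> E \<Longrightarrow> x \<le> k" for x unfolding k_def using fE by simp
  show ?thesis
  proof (intro exI allI impI)
    fix T assume T: "restr k T = restr k S"
    have "\<forall>a\<in>F. T a \<in> V a"
    proof
      fix a assume a: "a \<in> F"
      have "\<forall>b\<in>G a. T a b = S a b"
      proof
        fix b assume b: "b \<in> G a"
        have "\<forall>x\<in>set b. x \<le> k" using a b kE unfolding E_def by blast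
        then show "T a b = S a b" using restr_eqD[OF T] by blast
      qed
      then show "T a \<in> V a" using G a by blast
    qed
    then show "T \<in> U" using F(3) by blast
  qed
qed

lemma local_const:
  fixes \<Gamma> :: "struc \<Rightarrow> nat \<Rightarrow> 'c::discrete_topology"
  assumes "continuous_on X \<Gamma>" "S \<in> X"
  shows "\<exists>k. \<forall>T\<in>X. restr k T = restr k S \<longrightarrow> \<Gamma> T m = \<Gamma> S m"
proof -
  have c: "continuous_on X (\<lambda>T. \<Gamma> T m)" using continuous_on_product_then_coordinatewise[OF assms(1)] .
  then have ci: "\<forall>B. open B \<longrightarrow> (\<exists>A. open A \<and> A \<inter> X = (\<lambda>T. \<Gamma> T m) -` B \<inter> X)"
    by (simp only: continuous_on_open_invariant)
  have "open {\<Gamma> S m}" by (rule open_discrete)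
  with ci obtain A where A: "open A" "A \<inter> X = (\<lambda>T. \<Gamma> T m) -` {\<Gamma> S m} \<inter> X"
    by blast
  have "S \<in> A" using A(2) assms(2) by blast
  then obtain k where k: "\<forall>T. restr k T = restr k S \<longrightarrow> T \<in> A" using cyl A(1) by blast
  show ?thesis using k A(2) by blast
qed

lemma open_coord: "open {T::struc. T i xs = b}"
proof -
  have c1: "continuous_on UNIV (\<lambda>T::struc. T i)" by simp
  have c2: "continuous_on UNIV (\<lambda>g::nat list \<Rightarrow> bool. g xs)" by simp
  have c: "continuous_on UNIV (\<lambda>T::struc. T i xs)"
    using continuous_on_compose2[OF c2 c1] by simp
  have "\<forall>B. open B \<longrightarrow> open ((\<lambda>T::struc. T i xs) -` B)"
    using c continuous_on_open_vimage[OF open_UNIV, of "\<lambda>T::struc. T i xs"] by simp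
  then have "open ((\<lambda>T::struc. T i xs) -` {b})" by (simp add: open_discrete)
  then show ?thesis by (simp add: vimage_def)
qed

definition Fk :: "nat list \<Rightarrow> nat \<Rightarrow> (nat \<times> nat list) set" where
  "Fk sig k = {(i,xs). i < length sig \<and> length xs = sig ! i \<and> set xs \<subseteq> {..k}}"

lemma finite_Fk: "finite (Fk sig k)"
proof -
  have "Fk sig k \<subseteq> (SIGMA i:{..<length sig}. {xs. set xs \<subseteq> {..k} \<and> length xs = sig ! i})"
    unfolding Fk_def by auto
  moreover have "finite (SIGMA i:{..<length sig}. {xs. set xs \<subseteq> {..k} \<and> length xs = sig ! i})"
    by (intro finite_SigmaI finite_lists_length_eq) auto
  ultimately show ?thesis by (rule finite_subset)
qed

lemma restr_agree:
  assumes "wf_struc sig S" "wf_struc sig T" "\<forall>c\<in>Fk sig k. T (fst c) (snd c) = S (fst c) (snd c)"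
  shows "restr k T = restr k S"
proof (rule restr_eqI)
  fix i xs assume xs: "\<forall>x\<in>set xs. x \<le> k"
  show "T i xs = S i xs"
  proof (cases "(i,xs) \<in> Fk sig k")
    case True then show ?thesis using assms(3) by force
  next
    case False
    then have "\<not> (i < length sig \<and> length xs = sig ! i)" using xs unfolding Fk_def by auto
    then show ?thesis using assms(1,2) unfolding wf_struc_def by blast
  qed
qed

lemma cont_restr:
  fixes G :: "nat \<times> struc \<Rightarrow> 'b::topological_space"
  assumes "X \<subseteq> {S. wf_struc sig S}"
  shows "continuous_on X (\<lambda>S. G (restr k S))"
  unfolding continuous_on_open_invariant
proof (intro allI impI)
  fix B :: "'b set" assume "open B"
  define C where "C S = (\<Inter>c\<in>Fk sig k. {T::struc. T (fst c) (snd c) = S (fst c) (snd c)})" for S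
  have oC: "open (C S)" for S unfolding C_def using finite_Fk open_coord by blast
  define A where "A = (\<Union>S\<in>{S\<in>X. G (restr k S) \<in> B}. C S)"
  have "open A" unfolding A_def using oC by blast
  moreover have "A \<inter> X = (\<lambda>S. G (restr k S)) -` B \<inter> X"
  proof
    show "A \<inter> X \<subseteq> (\<lambda>S. G (restr k S)) -` B \<inter> X"
    proof
      fix T assume "T \<in> A \<inter> X"
      then obtain S where S: "S \<in> X" "G (restr k S) \<in> B" "T \<in> C S" "T \<in> X" unfolding A_def by blast
      have "restr k T = restr k S"
        by (rule restr_agree[of sig]) (use S assms C_def in auto)
      then show "T \<in> (\<lambda>S. G (restr k S)) -` B \<inter> X" using S by simp
    qed
  next
    show "(\<lambda>S. G (restr k S)) -` B \<inter> X \<subseteq> A \<inter> X"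
      unfolding A_def C_def by blast
  qed
  ultimately show "\<exists>A. open A \<and> A \<inter> X = (\<lambda>S. G (restr k S)) -` B \<inter> X" by blast
qed



definition pickr :: "('a \<Rightarrow> nat) \<Rightarrow> 'a set \<Rightarrow> 'a" where
  "pickr r X = (SOME B. B \<in> X \<and> r B = (LEAST n. n \<in> r ` X))"

lemma pickr_prop:
  assumes "X \<noteq> {}"
  shows "pickr r X \<in> X \<and> (\<forall>B\<in>X. r (pickr r X) \<le> r B)"
proof -
  obtain x where x: "x \<in> X" using assms by blast
  have "(LEAST n. n \<in> r ` X) \<in> r ` X" using x by (meson LeastI image_eqI)
  then have "\<exists>B. B \<in> X \<and> r B = (LEAST n. n \<in> r ` X)" by auto
  then have 1: "pickr r X \<in> X \<and> r (pickr r X) = (LEAST n. n \<in> r ` X)"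
    unfolding pickr_def by (rule someI_ex)
  have "\<forall>B\<in>X. (LEAST n. n \<in> r ` X) \<le> r B" by (simp add: Least_le)
  then show ?thesis using 1 by simp
qed

lemma pickr_eq:
  assumes "inj_on r K" "X \<subseteq> K" "A \<in> X" "\<forall>B\<in>X. r A \<le> r B"
  shows "pickr r X = A"
proof -
  have ne: "X \<noteq> {}" using assms(3) by blast
  have p1: "pickr r X \<in> X" using pickr_prop[OF ne] by blast
  have p2: "\<forall>B\<in>X. r (pickr r X) \<le> r B" using pickr_prop[OF ne] by blast
  have "r (pickr r X) \<le> r A" using p2 assms(3) by blast
  moreover have "r A \<le> r (pickr r X)" using assms(4) p1 by blast
  ultimately have e: "r (pickr r X) = r A" by simp
  have "pickr r X \<in> K" "A \<in> K" using assms(2,3) p1 by auto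
  then show ?thesis using inj_onD[OF assms(1) e] by blast
qed

lemma co_imp_nUs:
  assumes fam: "family sig K" and co: "co_learnable sig K"
  shows "nUs_learnable sig K"
proof -
  from co obtain M where MM: "is_learner sig K M \<and>
    (\<forall>S\<in>LD sig K. \<forall>A\<in>K. iso S A \<longrightarrow> range (\<lambda>s. M (restr s S)) - {None} = Some ` (K - {A}))"
    unfolding co_learnable_def by (rule exE)
  note Ml = conjunct1[OF MM] and Mc = conjunct2[OF MM]
  define r where "r = to_nat_on K"
  have cK: "countable K" using fam unfolding family_def by simp
  have inj: "inj_on r K" unfolding r_def using cK by (rule inj_on_to_nat_on)
  define C where "C p = {B\<in>K. \<exists>t\<le>fst p. M (restr t (snd p)) = Some B}" for p
  define M' where "M' p = (if K - C p = {} then None else Some (pickr r (K - C p)))" for p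
  have Cs: "C (restr s S) = {B\<in>K. \<exists>t\<le>s. M (restr t S) = Some B}" for s S
    unfolding C_def by (auto simp: restr_restr)
  have "M' p \<in> Some ` K \<union> {None}" for p
  proof (cases "K - C p = {}")
    case True then show ?thesis unfolding M'_def by simp
  next
    case False
    then have "pickr r (K - C p) \<in> K" using pickr_prop[OF False] by blast
    then show ?thesis unfolding M'_def using False by simp
  qed
  then have lrn: "is_learner sig K M'"
    unfolding is_learner_def by blast
  have keyA: "A \<notin> C (restr s S)" if "S \<in> LD sig K" "A \<in> K" "iso S A" for S A s
  proof
    assume "A \<in> C (restr s S)"
    then obtain t where t: "M (restr t S) = Some A" unfolding Cs by blast
    have "Some A \<in> range (\<lambda>s. M (restr s S))" by (rule range_eqI[where x=t and f="\<lambda>s. M (restr s S)", OF sym[OF t]])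
    then have "Some A \<in> range (\<lambda>s. M (restr s S)) - {None}" by simp
    then show False using Mc that by auto
  qed
  have keyB: "\<exists>t. M (restr t S) = Some B" if "S \<in> LD sig K" "A \<in> K" "iso S A" "B \<in> K" "B \<noteq> A" for S A B
  proof -
    have "Some B \<in> Some ` (K - {A})" using that by blast
    then have "Some B \<in> range (\<lambda>s. M (restr s S))" using Mc that by blast
    then show ?thesis by auto
  qed
  have Cmono: "C (restr n S) \<subseteq> C (restr m S)" if "n \<le> m" for n m S
    unfolding Cs using that order_trans by blast
  have Ex: "Ex_learns sig K M'"
    unfolding Ex_learns_def
  proof (intro conjI lrn ballI)
    fix S assume S: "S \<in> LD sig K"
    then obtain A where A: "A \<in> K" "iso S A" unfolding LD_def by blast
    define Fin where "Fin = {B\<in>K. r B < r A}"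
    have "finite (r ` Fin)" by (rule finite_subset[of _ "{..<r A}"]) (auto simp: Fin_def)
    moreover have "inj_on r Fin" using inj by (rule inj_on_subset) (auto simp: Fin_def)
    ultimately have fF: "finite Fin" by (rule finite_imageD)
    have "\<forall>B\<in>Fin. \<forall>\<^sub>F s in sequentially. B \<in> C (restr s S)"
    proof
      fix B assume B: "B \<in> Fin"
      then have "B \<in> K" "B \<noteq> A" unfolding Fin_def by auto
      then obtain t where t: "M (restr t S) = Some B" using keyB S A by blast
      show "\<forall>\<^sub>F s in sequentially. B \<in> C (restr s S)"
        unfolding Cs eventually_sequentially using t \<open>B \<in> K\<close> by (intro exI[of _ t]) auto
    qed
    then have ev: "\<forall>\<^sub>F s in sequentially. \<forall>B\<in>Fin. B \<in> C (restr s S)"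
      by (rule eventually_ball_finite[OF fF])
    have "\<forall>\<^sub>F s in sequentially. M' (restr s S) = Some A"
    proof (rule eventually_mono[OF ev])
      fix s assume h: "\<forall>B\<in>Fin. B \<in> C (restr s S)"
      have Ain: "A \<in> K - C (restr s S)" using keyA S A by blast
      have "\<forall>B\<in>K - C (restr s S). r A \<le> r B" using h unfolding Fin_def by force
      then have "pickr r (K - C (restr s S)) = A" using pickr_eq[OF inj _ Ain] by blast
      then show "M' (restr s S) = Some A" using Ain unfolding M'_def by auto
    qed
    then show "\<exists>A\<in>K. iso S A \<and> (\<forall>\<^sub>F n in sequentially. M' (restr n S) = Some A)"
      using A by blast
  qed
  have nUs: "\<forall>S\<in>LD sig K. \<forall>A\<in>K. iso S A \<longrightarrow>
        (\<forall>n m. n \<le> m \<longrightarrow> M' (restr n S) = Some A \<longrightarrow> M' (restr m S) = Some A)"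
  proof (intro ballI impI allI)
    fix S A n m assume S: "S \<in> LD sig K" and A: "A \<in> K" "iso S A" and nm: "n \<le> m"
      and out: "M' (restr n S) = Some A"
    have ne: "K - C (restr n S) \<noteq> {}" and pa: "pickr r (K - C (restr n S)) = A"
      using out unfolding M'_def by (auto split: if_splits)
    have min: "\<forall>B\<in>K - C (restr n S). r A \<le> r B" using pickr_prop[OF ne] pa by metis
    have Ain: "A \<in> K - C (restr m S)" using keyA S A by blast
    have "\<forall>B\<in>K - C (restr m S). r A \<le> r B" using min Cmono[OF nm, of S] by blast
    then have "pickr r (K - C (restr m S)) = A" using pickr_eq[OF inj _ Ain] by blast
    then show "M' (restr m S) = Some A" using Ain unfolding M'_def by auto
  qed
  show ?thesis unfolding nUs_learnable_def using Ex nUs by blast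
qed


lemma MD:
  assumes fam: "family sig K" and Ex: "Ex_learns sig K M"
  and nus: "\<forall>S\<in>LD sig K. \<forall>A\<in>K. iso S A \<longrightarrow>
        (\<forall>n m. n \<le> m \<longrightarrow> M (restr n S) = Some A \<longrightarrow> M (restr m S) = Some A)"
  and A: "A \<in> K" and B: "B \<in> K" and AB: "A \<noteq> B"
  and d1: "\<forall>S k. iso S A \<longrightarrow> (\<exists>T. iso T B \<and> restr k T = restr k S)"
  and d2: "\<forall>S k. iso S B \<longrightarrow> (\<exists>T. iso T A \<and> restr k T = restr k S)"
  shows False
proof -
  have "\<forall>\<^sub>F n in sequentially. M (restr n A) = Some A" using Ex_learnsD[OF Ex fam A iso_refl] .
  then obtain n where n: "M (restr n A) = Some A" unfolding eventually_sequentially by blast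
  obtain T where T: "iso T B" "restr n T = restr n A" using d1[rule_format, OF iso_refl, of n] by blast
  have "\<forall>\<^sub>F m in sequentially. M (restr m T) = Some B" using Ex_learnsD[OF Ex fam B T(1)] .
  then obtain N where N: "\<forall>m\<ge>N. M (restr m T) = Some B" unfolding eventually_sequentially by blast
  define m where "m = max N n"
  have m: "n \<le> m" "M (restr m T) = Some B" using N unfolding m_def by auto
  obtain S' where S': "iso S' A" "restr m S' = restr m T" using d2[rule_format, OF T(1), of m] by blast
  have "restr n S' = restr n T" using restr_eq_mono[OF m(1) S'(2)] .
  then have "M (restr n S') = Some A" using n T(2) by simp
  then have "M (restr m S') = Some A"
    using nus[rule_format, OF LD_iso[OF fam A S'(1)] A S'(1) m(1)] by blast
  then show False using S'(2) m(2) AB by simp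
qed

definition DkP :: "nat \<times> struc \<Rightarrow> struc \<Rightarrow> bool" where
  "DkP p B \<longleftrightarrow> (\<forall>T. iso T B \<longrightarrow> restr (fst p) T \<noteq> p)"

definition DD :: "struc \<Rightarrow> struc \<Rightarrow> bool" where
  "DD S B \<longleftrightarrow> (\<exists>k. DkP (restr k S) B)"


lemma D_inv:
  assumes "iso S T" "DD S B" shows "DD T B"
proof -
  obtain k where k: "DkP (restr k S) B" using assms(2) unfolding DD_def by blast
  obtain f where f0: "bij f" "\<forall>i xs. S i xs \<longleftrightarrow> T i (map f xs)" using assms(1) unfolding iso_def by blast
  note f = f0(1) f0(2)[rule_format]
  define k' where "k' = Max (f ` {..k})"
  have fk: "x \<le> k \<Longrightarrow> f x \<le> k'" for x unfolding k'_def by (rule Max_ge) auto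
  have "DkP (restr k' T) B" unfolding DkP_def
  proof (intro allI impI notI)
    fix T' assume T': "iso T' B" and eq: "restr (fst (restr k' T)) T' = restr k' T"
    then have eq': "restr k' T' = restr k' T" by simp
    define S' where "S' = (\<lambda>i xs. T' i (map f xs))"
    have "iso S' T'" unfolding iso_def S'_def using f(1) by blast
    then have iS': "iso S' B" using T' iso_trans by blast
    have "restr k S' = restr k S"
    proof (rule restr_eqI)
      fix i xs assume xs: "\<forall>x\<in>set xs. x \<le> k"
      then have "\<forall>x\<in>set (map f xs). x \<le> k'" using fk by auto
      then have "T' i (map f xs) = T i (map f xs)" using restr_eqD[OF eq'] by blast
      then show "S' i xs = S i xs" unfolding S'_def using f(2) by simp
    qed
    then show False using k iS' unfolding DkP_def by auto
  qed
  then show ?thesis unfolding DD_def by blast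
qed

lemma D_iso: "iso S T \<Longrightarrow> DD S B \<longleftrightarrow> DD T B"
  using D_inv iso_sym by blast

lemma not_D_self: "iso S B \<Longrightarrow> \<not> DD S B"
  unfolding DD_def DkP_def by auto

lemma nUs_imp_Erange:
  assumes fam: "family sig K" and nu: "nUs_learnable sig K"
  shows "Erange_learnable sig K"
proof -
  from nu obtain M where MM: "Ex_learns sig K M \<and> (\<forall>S\<in>LD sig K. \<forall>A\<in>K. iso S A \<longrightarrow>
        (\<forall>n m. n \<le> m \<longrightarrow> M (restr n S) = Some A \<longrightarrow> M (restr m S) = Some A))"
    unfolding nUs_learnable_def by (rule exE)
  note Ex = conjunct1[OF MM] and nus = conjunct2[OF MM]
  define r where "r = to_nat_on K"
  have cK: "countable K" using fam unfolding family_def by simp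
  have inj: "inj_on r K" unfolding r_def using cK by (rule inj_on_to_nat_on)
  have ir: "B \<in> K \<Longrightarrow> inv_into K r (r B) = B" for B using inj by (rule inv_into_f_f)
  define G where "G n p = (if n = 0 then 0 else
     (if fst (prod_decode (n - 1)) \<in> r ` K \<and> DkP p (inv_into K r (fst (prod_decode (n - 1))))
      then Suc (fst (prod_decode (n - 1))) else 0))" for n p
  define \<Gamma> where "\<Gamma> S n = G n (restr (snd (prod_decode (n - 1))) S)" for S n
  have wfLD: "LD sig K \<subseteq> {S. wf_struc sig S}" unfolding LD_def by blast
  have cont: "continuous_on (LD sig K) \<Gamma>"
  proof (rule continuous_on_coordinatewise_then_product)
    fix n
    show "continuous_on (LD sig K) (\<lambda>S. \<Gamma> S n)"
      unfolding \<Gamma>_def by (rule cont_restr[OF wfLD])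
  qed
  have G0: "\<Gamma> S 0 = 0" for S unfolding \<Gamma>_def G_def by simp
  have vals: "\<Gamma> S n = 0 \<or> (\<exists>B\<in>K. \<Gamma> S n = Suc (r B))" for S n
    unfolding \<Gamma>_def G_def by auto
  have mem: "Suc (r B) \<in> range (\<Gamma> S) \<longleftrightarrow> DD S B" if B: "B \<in> K" for S B
  proof
    assume "Suc (r B) \<in> range (\<Gamma> S)"
    then obtain n where n: "\<Gamma> S n = Suc (r B)" by auto
    have n0: "n \<noteq> 0"
    proof
      assume "n = 0" with n G0[of S] show False by simp
    qed
    define j where "j = fst (prod_decode (n - 1))"
    define k where "k = snd (prod_decode (n - 1))"
    have c: "j \<in> r ` K \<and> DkP (restr k S) (inv_into K r j)" and jj: "Suc j = Suc (r B)"
      using n n0 unfolding \<Gamma>_def G_def j_def k_def by (auto split: if_splits)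
    then have "inv_into K r j = B" using ir B by simp
    then show "DD S B" using c unfolding DD_def by blast
  next
    assume "DD S B"
    then obtain k where k: "DkP (restr k S) B" unfolding DD_def by blast
    define n where "n = Suc (prod_encode (r B, k))"
    have "\<Gamma> S n = Suc (r B)" unfolding \<Gamma>_def G_def n_def using k B ir by simp
    then show "Suc (r B) \<in> range (\<Gamma> S)" by (metis rangeI)
  qed
  have rng: "range (\<Gamma> S) = range (\<Gamma> T) \<longleftrightarrow> (\<forall>B\<in>K. DD S B \<longleftrightarrow> DD T B)" for S T
  proof
    assume "range (\<Gamma> S) = range (\<Gamma> T)"
    then show "\<forall>B\<in>K. DD S B \<longleftrightarrow> DD T B" using mem by blast
  next
    assume h: "\<forall>B\<in>K. DD S B \<longleftrightarrow> DD T B"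
    have sub: "range (\<Gamma> X) \<subseteq> range (\<Gamma> Y)" if hh: "\<forall>B\<in>K. DD X B \<longrightarrow> DD Y B" for X Y
    proof
      fix x assume "x \<in> range (\<Gamma> X)"
      then obtain n where n: "x = \<Gamma> X n" by auto
      show "x \<in> range (\<Gamma> Y)"
      proof (cases "\<Gamma> X n = 0")
        case True then show ?thesis using n G0 by (metis rangeI)
      next
        case False
        then have "\<exists>B\<in>K. \<Gamma> X n = Suc (r B)" using vals[of X n] by simp
        then obtain B where B: "B \<in> K" "\<Gamma> X n = Suc (r B)" by (elim bexE)
        then have "DD X B" using mem n by (metis rangeI)
        then have "DD Y B" using hh B(1) by blast
        then show ?thesis using mem B n by simp
      qed
    qed
    show "range (\<Gamma> S) = range (\<Gamma> T)" using sub h by (meson subset_antisym)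
  qed
  have main: "iso S T \<longleftrightarrow> (\<forall>B\<in>K. DD S B \<longleftrightarrow> DD T B)" if S: "S \<in> LD sig K" and T: "T \<in> LD sig K" for S T
  proof
    assume "iso S T" then show "\<forall>B\<in>K. DD S B \<longleftrightarrow> DD T B" using D_iso by blast
  next
    assume h: "\<forall>B\<in>K. DD S B \<longleftrightarrow> DD T B"
    obtain A where A: "A \<in> K" "iso S A" using S unfolding LD_def by blast
    obtain A' where A': "A' \<in> K" "iso T A'" using T unfolding LD_def by blast
    show "iso S T"
    proof (cases "A = A'")
      case True then show ?thesis using A A' iso_sym iso_trans by blast
    next
      case False
      have nA: "\<not> DD T A" using h A not_D_self by blast
      have nA': "\<not> DD S A'" using h A' not_D_self by blast
      have d1: "\<forall>S'' k. iso S'' A \<longrightarrow> (\<exists>T''. iso T'' A' \<and> restr k T'' = restr k S'')"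
      proof (intro allI impI)
        fix S'' k assume i: "iso S'' A"
        have "iso S'' S" using i A(2) iso_sym iso_trans by blast
        then have "\<not> DD S'' A'" using nA' D_iso by blast
        then show "\<exists>T''. iso T'' A' \<and> restr k T'' = restr k S''" unfolding DD_def DkP_def by auto
      qed
      have d2: "\<forall>S'' k. iso S'' A' \<longrightarrow> (\<exists>T''. iso T'' A \<and> restr k T'' = restr k S'')"
      proof (intro allI impI)
        fix S'' k assume i: "iso S'' A'"
        have "iso S'' T" using i A'(2) iso_sym iso_trans by blast
        then have "\<not> DD S'' A" using nA D_iso by blast
        then show "\<exists>T''. iso T'' A \<and> restr k T'' = restr k S''" unfolding DD_def DkP_def by auto
      qed
      show ?thesis using MD[OF fam Ex nus A(1) A'(1) False d1 d2] by blast
    qed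
  qed
  show ?thesis unfolding Erange_learnable_def E_learnable_def E_range_def
    using cont main rng by blast
qed


lemma Erange_fin_imp_nUs:
  assumes fam: "family sig K" and fin: "finite K" and er: "Erange_learnable sig K"
  shows "nUs_learnable sig K"
proof -
  from er obtain \<Gamma> :: "struc \<Rightarrow> nat \<Rightarrow> nat" where GG: "continuous_on (LD sig K) \<Gamma> \<and>
     (\<forall>S\<in>LD sig K. \<forall>T\<in>LD sig K. iso S T \<longleftrightarrow> range (\<Gamma> S) = range (\<Gamma> T))"
    unfolding Erange_learnable_def E_learnable_def E_range_def by (rule exE)
  note cont = conjunct1[OF GG] and eq = conjunct2[OF GG]
  define X where "X S = range (\<Gamma> S)" for S
  define d where "d A B = (SOME n. \<not> (n \<in> X A \<longleftrightarrow> n \<in> X B))" for A B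
  have dd: "\<not> (d A B \<in> X A \<longleftrightarrow> d A B \<in> X B)" if "A \<in> K" "B \<in> K" "A \<noteq> B" for A B
  proof -
    have "A \<in> LD sig K" "B \<in> LD sig K" using family_LD[OF fam] that by auto
    moreover have "\<not> iso A B" using that fam unfolding family_def by blast
    ultimately have "X A \<noteq> X B" using eq unfolding X_def by blast
    then have "\<exists>n. \<not> (n \<in> X A \<longleftrightarrow> n \<in> X B)" by blast
    then show ?thesis unfolding d_def by (rule someI_ex)
  qed
  define D where "D = (\<lambda>(A,B). d A B) ` {(A,B). A \<in> K \<and> B \<in> K \<and> A \<noteq> B}"
  have fD: "finite D" unfolding D_def
    by (rule finite_imageI, rule finite_subset[of _ "K \<times> K"]) (use fin in auto)
  define sg where "sg A = X A \<inter> D" for A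
  have sg_inj: "A = B" if "A \<in> K" "B \<in> K" "sg A = sg B" for A B
  proof (rule ccontr)
    assume ne: "A \<noteq> B"
    have "d A B \<in> D" unfolding D_def using that ne by auto
    then show False using dd[OF that(1,2) ne] that(3) unfolding sg_def by blast
  qed
  define Obs where "Obs p = {n. \<exists>m\<le>fst p. \<forall>T\<in>LD sig K. restr (fst p) T = p \<longrightarrow> \<Gamma> T m = n}" for p
  define M where "M p = (if \<exists>A\<in>K. sg A = Obs p \<inter> D then Some (THE A. A \<in> K \<and> sg A = Obs p \<inter> D) else None)" for p
  have M_Some: "M p = Some A" if "A \<in> K" "sg A = Obs p \<inter> D" for A p
  proof -
    have "(THE A. A \<in> K \<and> sg A = Obs p \<inter> D) = A"
      by (rule the_equality) (use that sg_inj in auto)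
    then show ?thesis unfolding M_def using that by auto
  qed
  have M_out: "M p = None \<or> (\<exists>A\<in>K. M p = Some A \<and> sg A = Obs p \<inter> D)" for p
  proof (cases "\<exists>A\<in>K. sg A = Obs p \<inter> D")
    case True
    then obtain A where "A \<in> K" "sg A = Obs p \<inter> D" by blast
    then show ?thesis using M_Some by blast
  next
    case False then show ?thesis unfolding M_def by simp
  qed
  have lrn: "is_learner sig K M" unfolding is_learner_def
  proof (intro ballI allI)
    fix S s
    show "M (restr s S) \<in> Some ` K \<union> {None}" using M_out[of "restr s S"] by auto
  qed
  have Obs_sub: "Obs (restr s S) \<subseteq> X S" if "S \<in> LD sig K" for s S
  proof
    fix n assume "n \<in> Obs (restr s S)"
    then obtain m where "\<forall>T\<in>LD sig K. restr s T = restr s S \<longrightarrow> \<Gamma> T m = n"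
      unfolding Obs_def by auto
    then have "\<Gamma> S m = n" using that by blast
    then show "n \<in> X S" unfolding X_def by (metis rangeI)
  qed
  have Obs_mono: "Obs (restr s S) \<subseteq> Obs (restr s' S)" if "s \<le> s'" for s s' S
  proof
    fix n assume "n \<in> Obs (restr s S)"
    then obtain m where m: "m \<le> s" "\<forall>T\<in>LD sig K. restr s T = restr s S \<longrightarrow> \<Gamma> T m = n"
      unfolding Obs_def by auto
    have "\<forall>T\<in>LD sig K. restr s' T = restr s' S \<longrightarrow> \<Gamma> T m = n"
      using m(2) restr_eq_mono[OF that] by blast
    moreover have "m \<le> s'" using m(1) that by simp
    ultimately show "n \<in> Obs (restr s' S)" unfolding Obs_def by auto
  qed
  have Obs_ev: "\<forall>\<^sub>F s in sequentially. n \<in> Obs (restr s S)" if S: "S \<in> LD sig K" and n: "n \<in> X S" for n S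
  proof -
    obtain m where m: "n = \<Gamma> S m" using n unfolding X_def by auto
    obtain k where k: "\<forall>T\<in>LD sig K. restr k T = restr k S \<longrightarrow> \<Gamma> T m = \<Gamma> S m"
      using local_const[OF cont S, of m] by blast
    show ?thesis unfolding eventually_sequentially
    proof (rule exI[of _ "max k m"], intro allI impI)
      fix s assume s: "max k m \<le> s"
      have "\<Gamma> T m = n" if T: "T \<in> LD sig K" "restr s T = restr s S" for T
      proof -
        have "k \<le> s" using s by simp
        then have "restr k T = restr k S" using restr_eq_mono T(2) by blast
        then show ?thesis using k T(1) m by simp
      qed
      moreover have "m \<le> s" using s by simp
      ultimately show "n \<in> Obs (restr s S)" unfolding Obs_def by auto
    qed
  qed
  have XS: "X S = X A" if "S \<in> LD sig K" "A \<in> K" "iso S A" for S A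
    using eq that family_LD[OF fam] unfolding X_def by blast
  have Ex: "Ex_learns sig K M" unfolding Ex_learns_def
  proof (intro conjI lrn ballI)
    fix S assume S: "S \<in> LD sig K"
    then obtain A where A: "A \<in> K" "iso S A" unfolding LD_def by blast
    have fs: "finite (sg A)" unfolding sg_def using fD by simp
    have "\<forall>n\<in>sg A. \<forall>\<^sub>F s in sequentially. n \<in> Obs (restr s S)"
      using Obs_ev[OF S] XS[OF S A] unfolding sg_def by blast
    then have ev: "\<forall>\<^sub>F s in sequentially. \<forall>n\<in>sg A. n \<in> Obs (restr s S)"
      by (rule eventually_ball_finite[OF fs])
    have "\<forall>\<^sub>F s in sequentially. M (restr s S) = Some A"
    proof (rule eventually_mono[OF ev])
      fix s assume h: "\<forall>n\<in>sg A. n \<in> Obs (restr s S)"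
      have "Obs (restr s S) \<inter> D \<subseteq> sg A" using Obs_sub[OF S] XS[OF S A] unfolding sg_def by blast
      moreover have "sg A \<subseteq> Obs (restr s S) \<inter> D" using h unfolding sg_def by blast
      ultimately show "M (restr s S) = Some A" using M_Some[OF A(1)] by blast
    qed
    then show "\<exists>A\<in>K. iso S A \<and> (\<forall>\<^sub>F n in sequentially. M (restr n S) = Some A)" using A by blast
  qed
  have nUs: "\<forall>S\<in>LD sig K. \<forall>A\<in>K. iso S A \<longrightarrow>
        (\<forall>n m. n \<le> m \<longrightarrow> M (restr n S) = Some A \<longrightarrow> M (restr m S) = Some A)"
  proof (intro ballI impI allI)
    fix S A n m assume S: "S \<in> LD sig K" and A: "A \<in> K" "iso S A" and nm: "n \<le> m"
      and out: "M (restr n S) = Some A"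
    have "sg A = Obs (restr n S) \<inter> D" using M_out[of "restr n S"] out by auto
    then have "sg A \<subseteq> Obs (restr m S) \<inter> D" using Obs_mono[OF nm, of S] by blast
    moreover have "Obs (restr m S) \<inter> D \<subseteq> sg A" using Obs_sub[OF S] XS[OF S A] unfolding sg_def by blast
    ultimately show "M (restr m S) = Some A" using M_Some[OF A(1)] by blast
  qed
  show ?thesis unfolding nUs_learnable_def using Ex nUs by blast
qed


definition U :: "nat set \<Rightarrow> struc" where
  "U P = (\<lambda>i xs. i = 0 \<and> (\<exists>x. xs = [x] \<and> x \<in> P))"

lemma U_app[simp]: "U P i xs \<longleftrightarrow> i = 0 \<and> (\<exists>x. xs = [x] \<and> x \<in> P)"
  by (simp add: U_def)

lemma U_single[simp]: "U P 0 [x] \<longleftrightarrow> x \<in> P" by simp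

lemma wf_U: "wf_struc [1] (U P)"
  unfolding wf_struc_def by auto

lemma wf_U_eq: assumes "wf_struc [1] S" shows "S = U {x. S 0 [x]}"
proof (intro ext)
  fix i xs
  show "S i xs = U {x. S 0 [x]} i xs"
  proof
    assume h: "S i xs"
    have "i < length [1::nat] \<and> length xs = [1::nat] ! i" using assms h unfolding wf_struc_def by blast
    then have "i < 1" "length xs = 1" by auto
    then obtain x where "i = 0" "xs = [x]" by (metis One_nat_def length_0_conv length_Suc_conv less_one)
    then show "U {x. S 0 [x]} i xs" using h by simp
  next
    assume "U {x. S 0 [x]} i xs"
    then show "S i xs" by auto
  qed
qed

lemma iso_U_D:
  assumes "iso (U P) (U Q)" shows "\<exists>f. bij f \<and> (\<forall>x. x \<in> P \<longleftrightarrow> f x \<in> Q)"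
proof -
  obtain f where f0: "bij f" "\<forall>i xs. U P i xs \<longleftrightarrow> U Q i (map f xs)" using assms unfolding iso_def by blast
  have "x \<in> P \<longleftrightarrow> f x \<in> Q" for x using f0(2)[rule_format, of 0 "[x]"] by simp
  then show ?thesis using f0(1) by blast
qed

lemma iso_U_I:
  assumes "bij f" "\<forall>x. x \<in> P \<longleftrightarrow> f x \<in> Q" shows "iso (U P) (U Q)"
proof -
  have "U P i xs \<longleftrightarrow> U Q i (map f xs)" for i xs
  proof (cases xs)
    case Nil then show ?thesis by simp
  next
    case (Cons a ys) then show ?thesis using assms(2) by (cases ys) auto
  qed
  then show ?thesis unfolding iso_def using assms(1) by blast
qed

lemma bij_pres:
  assumes "bij f" "\<forall>x. x \<in> P \<longleftrightarrow> f x \<in> Q"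
  shows "bij_betw f P Q" "bij_betw f (-P) (-Q)"
proof -
  have inj: "inj f" using assms(1) bij_is_inj by blast
  have sur: "\<And>y. f (inv f y) = y" using assms(1) bij_is_surj surj_f_inv_f by metis
  have "f ` P = Q"
  proof
    show "f ` P \<subseteq> Q" using assms(2) by blast
    show "Q \<subseteq> f ` P"
    proof
      fix y assume "y \<in> Q"
      then have "inv f y \<in> P" using assms(2) sur by metis
      then show "y \<in> f ` P" using sur by (metis image_eqI)
    qed
  qed
  then show "bij_betw f P Q" unfolding bij_betw_def using inj inj_on_subset by blast
  have "f ` (-P) = -Q"
  proof
    show "f ` (-P) \<subseteq> -Q" using assms(2) by blast
    show "-Q \<subseteq> f ` (-P)"
    proof
      fix y assume "y \<in> -Q"
      then have "inv f y \<in> -P" using assms(2) sur by (metis ComplD ComplI)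
      then show "y \<in> f ` (-P)" using sur by (metis image_eqI)
    qed
  qed
  then show "bij_betw f (-P) (-Q)" unfolding bij_betw_def using inj inj_on_subset by blast
qed

lemma iso_U_inv:
  assumes "iso (U P) (U Q)"
  shows "card P = card Q" "finite P \<longleftrightarrow> finite Q" "finite (-P) \<longleftrightarrow> finite (-Q)"
proof -
  obtain f where f: "bij f" "\<forall>x. x \<in> P \<longleftrightarrow> f x \<in> Q" using iso_U_D[OF assms] by blast
  show "card P = card Q" using bij_pres(1)[OF f] bij_betw_same_card by blast
  show "finite P \<longleftrightarrow> finite Q" using bij_pres(1)[OF f] bij_betw_finite by blast
  show "finite (-P) \<longleftrightarrow> finite (-Q)" using bij_pres(2)[OF f] bij_betw_finite by blast
qed

lemma iso_U_fin:
  assumes "finite P" "finite Q" "card P = card Q" "infinite (-P)" "infinite (-Q)"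
  shows "iso (U P) (U Q)"
proof -
  obtain g where g: "bij_betw g P Q" using finite_same_card_bij assms(1-3) by blast
  obtain e where e: "bij_betw e (-P) (-Q)" using bij_betw_infinite_nat assms(4,5) by blast
  obtain f where "bij f" "\<forall>x. x \<in> P \<longleftrightarrow> f x \<in> Q" using bij_combine[OF g e] by blast
  then show ?thesis by (rule iso_U_I)
qed

lemma iso_U_inf:
  assumes "infinite P" "infinite Q" "infinite (-P)" "infinite (-Q)"
  shows "iso (U P) (U Q)"
proof -
  obtain g where g: "bij_betw g P Q" using bij_betw_infinite_nat assms(1,2) by blast
  obtain e where e: "bij_betw e (-P) (-Q)" using bij_betw_infinite_nat assms(3,4) by blast
  obtain f where "bij f" "\<forall>x. x \<in> P \<longleftrightarrow> f x \<in> Q" using bij_combine[OF g e] by blast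
  then show ?thesis by (rule iso_U_I)
qed

definition Bn :: "nat \<Rightarrow> struc" where "Bn n = U {..<n}"
definition Binf :: struc where "Binf = U {x. even x}"

lemma inf_even: "infinite {x::nat. even x}"
  unfolding infinite_nat_iff_unbounded_le by (metis dvd_triv_left le_add2 mult_2 mem_Collect_eq)

lemma inf_odd: "infinite (- {x::nat. even x})"
proof -
  have "\<forall>m. \<exists>n\<ge>m. n \<in> - {x::nat. even x}"
  proof
    fix m :: nat
    have "2*m+1 \<ge> m" "odd (2*m+1)" by auto
    then show "\<exists>n\<ge>m. n \<in> - {x::nat. even x}" by blast
  qed
  then show ?thesis unfolding infinite_nat_iff_unbounded_le .
qed

lemma inf_compl_fin: "finite (F::nat set) \<Longrightarrow> infinite (-F)"
  by (simp add: Finite_Set.finite_compl)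

lemma Bn_ne_Binf: "Bn n \<noteq> Binf"
proof
  assume "Bn n = Binf"
  then have "Bn n 0 [2*n] = Binf 0 [2*n]" by simp
  then show False unfolding Bn_def Binf_def by simp
qed

definition K2 :: "struc set" where "K2 = range Bn \<union> {Binf}"
definition K1 :: "struc set" where "K1 = {Bn 0, Bn 1}"

lemma K2_wf: "A \<in> K2 \<Longrightarrow> wf_struc [1] A"
  unfolding K2_def Bn_def Binf_def using wf_U by auto

lemma K2_family: "family [1] K2"
  unfolding family_def
proof (intro conjI ballI impI)
  show "countable K2" unfolding K2_def by simp
next
  fix A assume "A \<in> K2" then show "wf_struc [1] A" by (rule K2_wf)
next
  fix A B assume A: "A \<in> K2" and B: "B \<in> K2" and i: "iso A B"
  show "A = B"
  proof (cases "A = Binf")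
    case True
    show ?thesis
    proof (cases "B = Binf")
      case False
      then obtain m where "B = Bn m" using B unfolding K2_def by auto
      then have "finite {x::nat. even x}" using iso_U_inv(2)[of "{x. even x}" "{..<m}"] i True
        unfolding Bn_def Binf_def by simp
      then show ?thesis using inf_even by blast
    qed (use True in simp)
  next
    case False
    then obtain n where n: "A = Bn n" using A unfolding K2_def by auto
    show ?thesis
    proof (cases "B = Binf")
      case True
      then have "finite {x::nat. even x}" using iso_U_inv(2)[of "{..<n}" "{x. even x}"] i n
        unfolding Bn_def Binf_def by simp
      then show ?thesis using inf_even by blast
    next
      case False
      then obtain m where m: "B = Bn m" using B unfolding K2_def by auto
      have "card {..<n} = card {..<m}" using iso_U_inv(1)[of "{..<n}" "{..<m}"] i n m
        unfolding Bn_def by simp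
      then show ?thesis using n m by simp
    qed
  qed
qed

lemma family_subset: assumes "family sig K" "K' \<subseteq> K" shows "family sig K'"
proof -
  have c: "countable K" and w: "\<forall>A\<in>K. wf_struc sig A" and u: "\<forall>A\<in>K. \<forall>B\<in>K. iso A B \<longrightarrow> A = B"
    using assms(1) unfolding family_def by auto
  have "countable K'" using countable_subset[OF assms(2) c] .
  moreover have "\<forall>A\<in>K'. wf_struc sig A" using w assms(2) by blast
  moreover have "\<forall>A\<in>K'. \<forall>B\<in>K'. iso A B \<longrightarrow> A = B" using u assms(2) by blast
  ultimately show ?thesis unfolding family_def by blast
qed

lemma K1_family: "family [1] K1"
  using family_subset[OF K2_family] unfolding K1_def K2_def by auto

lemma K2_LD: "S \<in> LD [1] K2 \<Longrightarrow> \<exists>P. S = U P \<and> infinite (-P)"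
proof -
  assume S: "S \<in> LD [1] K2"
  then have wf: "wf_struc [1] S" unfolding LD_def by blast
  define P where "P = {x. S 0 [x]}"
  have SP: "S = U P" unfolding P_def using wf_U_eq[OF wf] .
  obtain A where A: "A \<in> K2" "iso S A" using S unfolding LD_def by blast
  have "infinite (-P)"
  proof (cases "A = Binf")
    case True
    then show ?thesis using iso_U_inv(3)[of P "{x. even x}"] A SP inf_odd unfolding Binf_def by simp
  next
    case False
    then obtain n where "A = Bn n" using A unfolding K2_def by auto
    then show ?thesis using iso_U_inv(3)[of P "{..<n}"] A SP inf_compl_fin[of "{..<n}"] unfolding Bn_def by simp
  qed
  then show ?thesis using SP by blast
qed

lemma U_in_K2_LD: assumes "infinite (-P)" shows "U P \<in> LD [1] K2"
proof -
  have "\<exists>A\<in>K2. iso (U P) A"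
  proof (cases "finite P")
    case True
    have "iso (U P) (Bn (card P))" unfolding Bn_def
      by (rule iso_U_fin) (use True assms inf_compl_fin[of "{..<card P}"] in auto)
    then show ?thesis unfolding K2_def by blast
  next
    case False
    have "iso (U P) Binf" unfolding Binf_def
      by (rule iso_U_inf) (use False assms inf_even inf_odd in auto)
    then show ?thesis unfolding K2_def by blast
  qed
  then show ?thesis unfolding LD_def using wf_U by blast
qed


definition hc :: "nat set \<Rightarrow> nat \<Rightarrow> nat" where
  "hc P m = card {x. x < m \<and> x \<in> P}"

lemma hc_0: "hc P 0 = 0" unfolding hc_def by simp

lemma hc_Suc: "hc P (Suc m) = hc P m + (if m \<in> P then 1 else 0)"
proof (cases "m \<in> P")
  case True
  have "{x. x < Suc m \<and> x \<in> P} = insert m {x. x < m \<and> x \<in> P}" using True by auto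
  moreover have "finite {x. x < m \<and> x \<in> P}" by simp
  moreover have "m \<notin> {x. x < m \<and> x \<in> P}" by simp
  ultimately show ?thesis unfolding hc_def using True by simp
next
  case False
  have "{x. x < Suc m \<and> x \<in> P} = {x. x < m \<and> x \<in> P}" using False less_Suc_eq by auto
  then show ?thesis unfolding hc_def using False by simp
qed

lemma hc_ivt: "j \<le> hc P m \<Longrightarrow> j \<in> range (hc P)"
proof (induction m arbitrary: j)
  case 0 then show ?case using hc_0 by (metis le_zero_eq rangeI)
next
  case (Suc m)
  show ?case
  proof (cases "j \<le> hc P m")
    case True then show ?thesis using Suc.IH by blast
  next
    case False
    then have "j = hc P (Suc m)" using Suc.prems hc_Suc[of P m] by (auto split: if_splits)
    then show ?thesis by (metis rangeI)
  qed
qed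

lemma hc_bound: "finite P \<Longrightarrow> hc P m \<le> card P"
  unfolding hc_def by (rule card_mono) auto

lemma hc_reach: assumes "finite P" shows "card P \<in> range (hc P)"
proof -
  define m where "m = Suc (Max (insert 0 P))"
  have "{x. x < m \<and> x \<in> P} = P"
    using assms unfolding m_def by (auto simp: le_imp_less_Suc)
  then have "hc P m = card P" unfolding hc_def by simp
  then show ?thesis by (metis rangeI)
qed

lemma range_hc_fin: assumes "finite P" shows "range (hc P) = {..card P}"
proof
  show "range (hc P) \<subseteq> {..card P}" using hc_bound[OF assms] by auto
  show "{..card P} \<subseteq> range (hc P)"
  proof
    fix j assume "j \<in> {..card P}"
    moreover obtain m where "hc P m = card P" using hc_reach[OF assms] by auto
    ultimately show "j \<in> range (hc P)" using hc_ivt[of j P m] by simp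
  qed
qed

lemma range_hc_inf: assumes "infinite P" shows "range (hc P) = UNIV"
proof -
  have "j \<in> range (hc P)" for j
  proof -
    obtain F where F: "finite F" "card F = j" "F \<subseteq> P" using infinite_arbitrarily_large[OF assms] by blast
    define m where "m = Suc (Max (insert 0 F))"
    have "F \<subseteq> {x. x < m \<and> x \<in> P}" using F unfolding m_def by (auto simp: le_imp_less_Suc)
    then have "j \<le> hc P m" unfolding hc_def using F(2) by (intro card_mono[of _ F, simplified F(2)]) auto
    then show ?thesis by (rule hc_ivt)
  qed
  then show ?thesis by blast
qed

lemma K2_Erange: "Erange_learnable [1] K2"
proof -
  define G where "G m p = card {x. x < m \<and> snd p 0 [x]}" for m and p :: "nat \<times> struc"
  define \<Gamma> where "\<Gamma> S m = G m (restr m S)" for S m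
  have wfLD: "LD [1] K2 \<subseteq> {S. wf_struc [1] S}" unfolding LD_def by blast
  have cont: "continuous_on (LD [1] K2) \<Gamma>"
  proof (rule continuous_on_coordinatewise_then_product)
    fix m
    show "continuous_on (LD [1] K2) (\<lambda>S. \<Gamma> S m)"
      unfolding \<Gamma>_def by (rule cont_restr[OF wfLD])
  qed
  have GU: "\<Gamma> (U P) = hc P" for P
  proof
    fix m
    have "{x. x < m \<and> snd (restr m (U P)) 0 [x]} = {x. x < m \<and> x \<in> P}"
      by (auto simp: restr_def)
    then show "\<Gamma> (U P) m = hc P m" unfolding \<Gamma>_def G_def hc_def by simp
  qed
  have main: "iso S T \<longleftrightarrow> range (\<Gamma> S) = range (\<Gamma> T)"
    if S: "S \<in> LD [1] K2" and T: "T \<in> LD [1] K2" for S T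
  proof -
    obtain P where P: "S = U P" "infinite (-P)" using K2_LD[OF S] by blast
    obtain Q where Q: "T = U Q" "infinite (-Q)" using K2_LD[OF T] by blast
    have rP: "range (\<Gamma> S) = (if finite P then {..card P} else UNIV)"
      using P(1) GU range_hc_fin range_hc_inf by simp
    have rQ: "range (\<Gamma> T) = (if finite Q then {..card Q} else UNIV)"
      using Q(1) GU range_hc_fin range_hc_inf by simp
    show ?thesis
    proof
      assume "iso S T"
      then have "card P = card Q" "finite P \<longleftrightarrow> finite Q" using iso_U_inv P Q by auto
      then show "range (\<Gamma> S) = range (\<Gamma> T)" using rP rQ by simp
    next
      assume r: "range (\<Gamma> S) = range (\<Gamma> T)"
      have nf: "\<not> finite (UNIV :: nat set)" by simp
      show "iso S T"
      proof (cases "finite P")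
        case True
        have fQ: "finite Q"
        proof (rule ccontr)
          assume "\<not> finite Q"
          then have "{..card P} = UNIV" using r rP rQ True by simp
          then show False using nf by (metis finite_atMost)
        qed
        then have "card P = card Q" using r rP rQ True by simp
        then show ?thesis using iso_U_fin True fQ P Q by simp
      next
        case False
        have fQ: "\<not> finite Q"
        proof
          assume "finite Q"
          then have "{..card Q} = UNIV" using r rP rQ False by simp
          then show False using nf by (metis finite_atMost)
        qed
        then show ?thesis using iso_U_inf False P Q by simp
      qed
    qed
  qed
  show ?thesis unfolding Erange_learnable_def E_learnable_def E_range_def
    using cont main by blast
qed

lemma K2_not_Ex: "\<not> Ex_learnable [1] K2"
proof
  assume "Ex_learnable [1] K2"
  then obtain M where Ex: "Ex_learns [1] K2 M" unfolding Ex_learnable_def by blast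
  have fam: "family [1] K2" by (rule K2_family)
  have bad: "\<exists>N. \<forall>n\<ge>N. M (restr n (U Q)) \<noteq> Some Binf" if Q: "finite Q" for Q
  proof -
    have i: "iso (U Q) (Bn (card Q))" unfolding Bn_def
      by (rule iso_U_fin) (use Q inf_compl_fin[of Q] inf_compl_fin[of "{..<card Q}"] in auto)
    have "Bn (card Q) \<in> K2" unfolding K2_def by simp
    then have "\<forall>\<^sub>F n in sequentially. M (restr n (U Q)) = Some (Bn (card Q))"
      using Ex_learnsD[OF Ex fam _ i] by blast
    then obtain N where N: "\<forall>n\<ge>N. M (restr n (U Q)) = Some (Bn (card Q))"
      unfolding eventually_sequentially by blast
    have "\<forall>n\<ge>N. M (restr n (U Q)) \<noteq> Some Binf"
    proof (intro allI impI)
      fix n assume "N \<le> n"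
      then have "M (restr n (U Q)) = Some (Bn (card Q))" using N by blast
      then show "M (restr n (U Q)) \<noteq> Some Binf" using Bn_ne_Binf[of "card Q"] by simp
    qed
    then show ?thesis by blast
  qed
  define nxt where "nxt Q = (SOME n. Suc (Max (insert 0 Q)) < n \<and> M (restr n (U Q)) \<noteq> Some Binf)" for Q
  have nxt: "Suc (Max (insert 0 Q)) < nxt Q \<and> M (restr (nxt Q) (U Q)) \<noteq> Some Binf" if fQ: "finite Q" for Q
  proof -
    obtain N where N: "\<forall>n\<ge>N. M (restr n (U Q)) \<noteq> Some Binf" using bad[OF fQ] by blast
    define n where "n = max N (Suc (Suc (Max (insert 0 Q))))"
    have "Suc (Max (insert 0 Q)) < n \<and> M (restr n (U Q)) \<noteq> Some Binf" using N unfolding n_def by auto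
    then show ?thesis unfolding nxt_def by (rule someI)
  qed
  define ps where "ps = rec_nat {} (\<lambda>k Q. insert (Suc (nxt Q)) Q)"
  have ps0: "ps 0 = {}" unfolding ps_def by simp
  have psS: "ps (Suc k) = insert (Suc (nxt (ps k))) (ps k)" for k unfolding ps_def by simp
  have fin: "finite (ps k)" for k by (induction k) (auto simp: ps0 psS)
  define nk where "nk k = nxt (ps k)" for k
  have nk: "Suc (Max (insert 0 (ps k))) < nk k" "M (restr (nk k) (U (ps k))) \<noteq> Some Binf" for k
    using nxt[OF fin[of k]] unfolding nk_def by auto
  have lt: "x \<in> ps k \<Longrightarrow> x < nk k" for x k
  proof -
    assume "x \<in> ps k"
    then have "x \<le> Max (insert 0 (ps k))" using fin[of k] by simp
    then show "x < nk k" using nk(1)[of k] by simp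
  qed
  have step: "nk k < nk (Suc k)" for k
  proof -
    have "Suc (nk k) \<in> ps (Suc k)" unfolding psS nk_def by simp
    then have "Suc (nk k) < nk (Suc k)" by (rule lt)
    then show ?thesis by simp
  qed
  have ge: "k \<le> nk k" for k
  proof (induction k)
    case (Suc k) then show ?case using step[of k] by simp
  qed simp
  have mono: "nk k \<le> nk (k + j)" for k j
  proof (induction j)
    case (Suc j) then show ?case using step[of "k + j"] by simp
  qed simp
  have psmono: "ps k \<subseteq> ps (k + j)" for k j
    by (induction j) (auto simp: psS)
  define P where "P = (\<Union>k. ps k)"
  have keep: "x \<in> ps (k + j) \<Longrightarrow> x \<le> nk k \<Longrightarrow> x \<in> ps k" for x k j
  proof (induction j)
    case 0 then show ?case by simp
  next
    case (Suc j)
    have "x \<in> insert (Suc (nk (k + j))) (ps (k + j))" using Suc.prems(1) unfolding nk_def by (simp add: psS)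
    moreover have "x \<noteq> Suc (nk (k + j))" using mono[of k j] Suc.prems(2) by simp
    ultimately show ?case using Suc.IH Suc.prems(2) by simp
  qed
  have Pk: "x \<le> nk k \<Longrightarrow> x \<in> P \<longleftrightarrow> x \<in> ps k" for x k
  proof
    assume x: "x \<le> nk k" "x \<in> P"
    then obtain j where j: "x \<in> ps j" unfolding P_def by blast
    show "x \<in> ps k"
    proof (cases "j \<le> k")
      case True then show ?thesis using j psmono[of j "k - j"] by auto
    next
      case False then show ?thesis using j keep[of x k "j - k"] x(1) by simp
    qed
  next
    assume "x \<in> ps k" then show "x \<in> P" unfolding P_def by blast
  qed
  have R: "restr (nk k) (U P) = restr (nk k) (U (ps k))" for k
  proof (rule restr_eqI)
    fix i xs assume xs: "\<forall>x\<in>set xs. x \<le> nk k"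
    show "U P i xs = U (ps k) i xs"
    proof (cases xs)
      case Nil then show ?thesis by simp
    next
      case (Cons a ys)
      show ?thesis using Pk[of a k] xs Cons by (cases ys) auto
    qed
  qed
  have infP: "infinite P" unfolding infinite_nat_iff_unbounded_le
  proof
    fix m
    have "Suc (nk m) \<in> ps (Suc m)" unfolding psS nk_def by simp
    then have "Suc (nk m) \<in> P" unfolding P_def by blast
    moreover have "m \<le> Suc (nk m)" using ge[of m] by simp
    ultimately show "\<exists>n\<ge>m. n \<in> P" by blast
  qed
  have infcP: "infinite (-P)" unfolding infinite_nat_iff_unbounded_le
  proof
    fix m
    have "nk m \<notin> ps m" using lt[of "nk m" m] by auto
    then have "nk m \<notin> P" using Pk[of "nk m" m] by simp
    then show "\<exists>n\<ge>m. n \<in> -P" using ge[of m] by blast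
  qed
  have i: "iso (U P) Binf" unfolding Binf_def
    by (rule iso_U_inf) (use infP infcP inf_even inf_odd in auto)
  have "Binf \<in> K2" unfolding K2_def by simp
  then have "\<forall>\<^sub>F n in sequentially. M (restr n (U P)) = Some Binf"
    using Ex_learnsD[OF Ex fam _ i] by blast
  then obtain N where N: "\<forall>n\<ge>N. M (restr n (U P)) = Some Binf"
    unfolding eventually_sequentially by blast
  have "M (restr (nk N) (U P)) = Some Binf" using N ge[of N] by blast
  then show False using nk(2)[of N] R[of N] by simp
qed


lemma Bn01: "Bn 0 \<noteq> Bn 1"
proof
  assume "Bn 0 = Bn 1"
  then have "Bn 0 0 [0] = Bn 1 0 [0]" by simp
  then show False unfolding Bn_def by simp
qed

lemma K1_LD:
  assumes S: "S \<in> LD [1] K1"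
  shows "(S = U {} \<and> iso S (Bn 0)) \<or> (\<exists>a. S = U {a} \<and> iso S (Bn 1))"
proof -
  have wf: "wf_struc [1] S" using S unfolding LD_def by blast
  define P where "P = {x. S 0 [x]}"
  have SP: "S = U P" unfolding P_def using wf_U_eq[OF wf] .
  obtain A where A: "A \<in> K1" "iso S A" using S unfolding LD_def by blast
  show ?thesis
  proof (cases "A = Bn 0")
    case True
    then have "card P = 0" "finite P" using iso_U_inv(1,2)[of P "{..<0}"] A SP unfolding Bn_def by auto
    then have "P = {}" by simp
    then show ?thesis using SP A True by simp
  next
    case False
    then have B1: "A = Bn 1" using A unfolding K1_def by simp
    then have "card P = 1" using iso_U_inv(1)[of P "{..<1}"] A SP unfolding Bn_def by auto
    then obtain a where "P = {a}" using card_1_singletonE by blast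
    then show ?thesis using SP A B1 by blast
  qed
qed

lemma K1_nUs: "nUs_learnable [1] K1"
proof -
  define M where "M p = (if \<exists>x\<le>fst p. snd p 0 [x] then Some (Bn 1) else Some (Bn 0))" for p :: "nat \<times> struc"
  have Mr: "M (restr s (U P)) = (if \<exists>x\<le>s. x \<in> P then Some (Bn 1) else Some (Bn 0))" for s P
    unfolding M_def by (simp add: restr_def)
  have lrn: "is_learner [1] K1 M" unfolding is_learner_def M_def K1_def by auto
  have fam: "family [1] K1" by (rule K1_family)
  have Ex: "Ex_learns [1] K1 M" unfolding Ex_learns_def
  proof (intro conjI lrn ballI)
    fix S assume S: "S \<in> LD [1] K1"
    show "\<exists>A\<in>K1. iso S A \<and> (\<forall>\<^sub>F n in sequentially. M (restr n S) = Some A)"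
    proof (cases "S = U {} \<and> iso S (Bn 0)")
      case True
      then have "\<forall>\<^sub>F n in sequentially. M (restr n S) = Some (Bn 0)" using Mr by simp
      then show ?thesis using True unfolding K1_def by blast
    next
      case False
      then obtain a where a: "S = U {a}" "iso S (Bn 1)" using K1_LD[OF S] by blast
      have "\<forall>\<^sub>F n in sequentially. M (restr n S) = Some (Bn 1)"
        unfolding eventually_sequentially a(1) Mr by (intro exI[of _ a]) auto
      then show ?thesis using a unfolding K1_def by blast
    qed
  qed
  have nUs: "\<forall>S\<in>LD [1] K1. \<forall>A\<in>K1. iso S A \<longrightarrow>
        (\<forall>n m. n \<le> m \<longrightarrow> M (restr n S) = Some A \<longrightarrow> M (restr m S) = Some A)"
  proof (intro ballI impI allI)
    fix S A n m assume S: "S \<in> LD [1] K1" and A: "A \<in> K1" "iso S A" and nm: "n \<le> m"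
      and out: "M (restr n S) = Some A"
    show "M (restr m S) = Some A"
    proof (cases "S = U {} \<and> iso S (Bn 0)")
      case True
      then show ?thesis using out Mr by simp
    next
      case False
      then obtain a where a: "S = U {a}" "iso S (Bn 1)" using K1_LD[OF S] by blast
      show ?thesis
      proof (cases "a \<le> n")
        case True
        then show ?thesis using out nm a(1) Mr by auto
      next
        case False
        then have "A = Bn 0" using out a(1) Mr by auto
        then have "Bn 0 = Bn 1" using family_uniq[OF fam _ _ A(2) a(2)] A(1) unfolding K1_def by auto
        then show ?thesis using Bn01 by blast
      qed
    qed
  qed
  show ?thesis unfolding nUs_learnable_def using Ex nUs by blast
qed

lemma K1_not_co: "\<not> co_learnable [1] K1"
proof
  assume "co_learnable [1] K1"
  then obtain M where MM: "is_learner [1] K1 M \<and>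
     (\<forall>S\<in>LD [1] K1. \<forall>A\<in>K1. iso S A \<longrightarrow> range (\<lambda>s. M (restr s S)) - {None} = Some ` (K1 - {A}))"
    unfolding co_learnable_def by (rule exE)
  note Mc = conjunct2[OF MM]
  have fam: "family [1] K1" by (rule K1_family)
  have b0: "Bn 0 \<in> K1" and b1: "Bn 1 \<in> K1" unfolding K1_def by auto
  have K10: "K1 - {Bn 0} = {Bn 1}" and K11: "K1 - {Bn 1} = {Bn 0}" unfolding K1_def using Bn01 by auto
  have e: "range (\<lambda>s. M (restr s (Bn 0))) - {None} = {Some (Bn 1)}"
    using Mc[rule_format, OF family_LD[OF fam b0] b0 iso_refl] K10 by simp
  have "Some (Bn 1) \<in> range (\<lambda>s. M (restr s (Bn 0))) - {None}" unfolding e by simp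
  then have "Some (Bn 1) \<in> range (\<lambda>s. M (restr s (Bn 0)))" by (rule DiffD1)
  then obtain s where s: "M (restr s (Bn 0)) = Some (Bn 1)" by (rule rangeE) simp
  define T where "T = U {Suc s}"
  have iT: "iso T (Bn 1)" unfolding T_def Bn_def
    by (rule iso_U_fin) (use inf_compl_fin[of "{Suc s}"] inf_compl_fin[of "{..<1}"] in auto)
  have rT: "range (\<lambda>s. M (restr s T)) - {None} = {Some (Bn 0)}"
    using Mc[rule_format, OF LD_iso[OF fam b1 iT] b1 iT] K11 by simp
  have "restr s T = restr s (Bn 0)"
  proof (rule restr_eqI)
    fix i xs assume xs: "\<forall>x\<in>set xs. x \<le> s"
    show "T i xs = Bn 0 i xs" unfolding T_def Bn_def using xs by auto
  qed
  then have "M (restr s T) = Some (Bn 1)" using s by simp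
  then have "Some (Bn 1) \<in> range (\<lambda>s. M (restr s T))"
    by (rule range_eqI[where x=s and f="\<lambda>s. M (restr s T)", OF sym])
  then have "Some (Bn 1) \<in> range (\<lambda>s. M (restr s T)) - {None}" by simp
  then have "Some (Bn 1) \<in> {Some (Bn 0)}" unfolding rT .
  then show False using Bn01 by simp
qed


definition Wle :: struc where "Wle = (\<lambda>i xs. i = 0 \<and> (\<exists>x y. xs = [x,y] \<and> x \<le> y))"
definition Wge :: struc where "Wge = (\<lambda>i xs. i = 0 \<and> (\<exists>x y. xs = [x,y] \<and> y \<le> x))"
definition K3 :: "struc set" where "K3 = {Wle, Wge}"

lemma Wle_ne_Wge: "Wle \<noteq> Wge"
proof
  assume "Wle = Wge"
  then have "Wle 0 [0,1] = Wge 0 [0,1]" by simp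
  then show False unfolding Wle_def Wge_def by simp
qed

lemma map2_cases: "map f xs = [a,b] \<longleftrightarrow> (\<exists>x y. xs = [x,y] \<and> a = f x \<and> b = f y)"
  by (cases xs; cases "tl xs"; cases "tl (tl xs)") auto

lemma iso_Wle_iff: "(\<forall>i xs. S i xs \<longleftrightarrow> Wle i (map f xs)) \<Longrightarrow> S 0 [x,y] \<longleftrightarrow> f x \<le> f y"
  unfolding Wle_def by simp

lemma iso_Wge_iff: "(\<forall>i xs. S i xs \<longleftrightarrow> Wge i (map f xs)) \<Longrightarrow> S 0 [x,y] \<longleftrightarrow> f y \<le> f x"
  unfolding Wge_def by simp

lemma not_iso_Wle_Wge: "\<not> iso Wle Wge"
proof
  assume "iso Wle Wge"
  then obtain f where f: "bij f" "\<forall>i xs. Wle i xs \<longleftrightarrow> Wge i (map f xs)" unfolding iso_def by blast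
  have "f y \<le> f 0" for y using f(2)[rule_format, of 0 "[0,y]"] unfolding Wle_def Wge_def by simp
  then have "range f \<subseteq> {..f 0}" by auto
  then have "finite (range f)" using finite_subset by blast
  moreover have "range f = UNIV" using f(1) bij_is_surj by blast
  ultimately show False by simp
qed

lemma K3_family: "family [2] K3"
  unfolding family_def
proof (intro conjI ballI impI)
  show "countable K3" unfolding K3_def by simp
next
  fix A assume "A \<in> K3" then show "wf_struc [2] A"
    unfolding K3_def Wle_def Wge_def wf_struc_def by auto
next
  fix A B assume A: "A \<in> K3" and B: "B \<in> K3" and i: "iso A B"
  show "A = B"
  proof (rule ccontr)
    assume "A \<noteq> B"
    then have "(A = Wle \<and> B = Wge) \<or> (A = Wge \<and> B = Wle)" using A B unfolding K3_def by auto
    then show False using i not_iso_Wle_Wge iso_sym by blast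
  qed
qed

lemma dens_bij:
  fixes f :: "nat \<Rightarrow> nat"
  assumes "bij f"
  shows "\<exists>g::nat\<Rightarrow>nat. bij g \<and> (\<forall>x y. x \<le> k \<longrightarrow> y \<le> k \<longrightarrow> (g x \<le> g y \<longleftrightarrow> f y \<le> f x))"
proof -
  define c where "c = Max (f ` {..k})"
  have fc: "x \<le> k \<Longrightarrow> f x \<le> c" for x unfolding c_def by (rule Max_ge) auto
  have inj: "inj_on (\<lambda>x. c - f x) {..k}"
  proof (rule inj_onI)
    fix x y assume xy: "x \<in> {..k}" "y \<in> {..k}" "c - f x = c - f y"
    have "f x \<le> c" "f y \<le> c" using fc xy(1,2) by auto
    then have "f x = f y" using xy(3) by linarith
    then show "x = y" using assms bij_is_inj injD by metis
  qed
  obtain g where g: "bij g" "\<forall>x\<in>{..k}. g x = c - f x" using extend_bij[OF _ inj] by blast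
  have "\<forall>x y. x \<le> k \<longrightarrow> y \<le> k \<longrightarrow> (g x \<le> g y \<longleftrightarrow> f y \<le> f x)"
  proof (intro allI impI)
    fix x y assume "x \<le> k" "y \<le> k"
    then show "g x \<le> g y \<longleftrightarrow> f y \<le> f x" using g(2) fc[of x] fc[of y] by auto
  qed
  then show ?thesis using g(1) by (intro exI[of _ g]) simp
qed

lemma K3_dens:
  assumes "iso S A" and AB: "(A = Wle \<and> B = Wge) \<or> (A = Wge \<and> B = Wle)"
  shows "\<exists>T. iso T B \<and> restr k T = restr k S"
proof -
  obtain f where f: "bij f" "\<forall>i xs. S i xs \<longleftrightarrow> A i (map f xs)" using assms(1) unfolding iso_def by blast
  obtain g :: "nat \<Rightarrow> nat" where g: "bij g" "\<forall>x y. x \<le> k \<longrightarrow> y \<le> k \<longrightarrow> (g x \<le> g y \<longleftrightarrow> f y \<le> f x)"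
    using dens_bij[OF f(1), of k] by blast
  define T where "T = (\<lambda>i xs. B i (map g xs))"
  have "iso T B" unfolding iso_def T_def using g(1) by (intro exI[of _ g]) simp
  moreover have "restr k T = restr k S"
  proof (rule restr_eqI)
    fix i xs assume xs: "\<forall>x\<in>set xs. x \<le> k"
    show "T i xs = S i xs"
    proof (cases "\<exists>x y. xs = [x,y]")
      case True
      then obtain x y where xy: "xs = [x,y]" by blast
      have "x \<le> k" "y \<le> k" using xs xy by auto
      then have e1: "g x \<le> g y \<longleftrightarrow> f y \<le> f x" and e2: "g y \<le> g x \<longleftrightarrow> f x \<le> f y" using g(2) by auto
      show ?thesis using AB e1 e2 f(2) unfolding T_def xy Wle_def Wge_def by auto
    next
      case False
      then show ?thesis using AB f(2) unfolding T_def Wle_def Wge_def by (auto simp: map2_cases)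
    qed
  qed
  ultimately show ?thesis by blast
qed

lemma K3_LD:
  assumes S: "S \<in> LD [2] K3"
  shows "(iso S Wle \<and> (\<exists>f::nat\<Rightarrow>nat. bij f \<and> (\<forall>x y. S 0 [x,y] \<longleftrightarrow> f x \<le> f y))) \<or>
         (iso S Wge \<and> (\<exists>f::nat\<Rightarrow>nat. bij f \<and> (\<forall>x y. S 0 [x,y] \<longleftrightarrow> f y \<le> f x)))"
proof -
  obtain A where A: "A \<in> K3" "iso S A" using S unfolding LD_def by blast
  obtain f where f: "bij f" "\<forall>i xs. S i xs \<longleftrightarrow> A i (map f xs)" using A(2) unfolding iso_def by blast
  show ?thesis
  proof (cases "A = Wle")
    case True
    then show ?thesis using A f iso_Wle_iff[of S f] by blast
  next
    case False
    then have "A = Wge" using A unfolding K3_def by auto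
    then show ?thesis using A f iso_Wge_iff[of S f] by blast
  qed
qed

lemma K3_Ex: "Ex_learnable [2] K3"
proof -
  define cnd where "cnd s S = (\<exists>x\<le>s. (\<forall>y\<le>s. S 0 [x,y]) \<and> (\<forall>z<x. \<not> (\<forall>y\<le>s. S 0 [y,z])))" for s and S :: struc
  define M where "M p = (if cnd (fst p) (snd p) then Some Wle else Some Wge)" for p :: "nat \<times> struc"
  have cr: "cnd s (snd (restr s S)) \<longleftrightarrow> cnd s S" for s S
    unfolding cnd_def restr_def by auto
  have Mr: "M (restr s S) = (if cnd s S then Some Wle else Some Wge)" for s S
    unfolding M_def using cr by simp
  have lrn: "is_learner [2] K3 M" unfolding is_learner_def M_def K3_def by auto
  have "Ex_learns [2] K3 M" unfolding Ex_learns_def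
  proof (intro conjI lrn ballI)
    fix S assume S: "S \<in> LD [2] K3"
    show "\<exists>A\<in>K3. iso S A \<and> (\<forall>\<^sub>F n in sequentially. M (restr n S) = Some A)"
    proof (cases "iso S Wle \<and> (\<exists>f::nat\<Rightarrow>nat. bij f \<and> (\<forall>x y. S 0 [x,y] \<longleftrightarrow> f x \<le> f y))")
      case True
      then obtain f :: "nat \<Rightarrow> nat" where f: "bij f" "\<forall>x y. S 0 [x,y] \<longleftrightarrow> f x \<le> f y" by blast
      have sur: "\<And>y. f (inv f y) = y" using f(1) bij_is_surj surj_f_inv_f by metis
      define x0 where "x0 = inv f 0"
      define w where "w z = inv f (Suc (f z))" for z
      define N where "N = Max (insert x0 (w ` {..<x0}))"
      have Nx: "x0 \<le> N" unfolding N_def by simp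
      have Nw: "z < x0 \<Longrightarrow> w z \<le> N" for z unfolding N_def by (rule Max_ge) auto
      have cN: "cnd s S" if s: "N \<le> s" for s
        unfolding cnd_def
      proof (intro exI[of _ x0] conjI allI impI)
        show "x0 \<le> s" using Nx s by simp
        fix y assume "y \<le> s" show "S 0 [x0, y]" using f(2) sur unfolding x0_def by simp
      next
        fix z assume z: "z < x0"
        show "\<not> (\<forall>y\<le>s. S 0 [y,z])"
        proof
          assume "\<forall>y\<le>s. S 0 [y,z]"
          then have "S 0 [w z, z]" using Nw[OF z] s by simp
          then have "f (w z) \<le> f z" using f(2) by blast
          then show False using sur unfolding w_def by simp
        qed
      qed
      have "\<forall>\<^sub>F n in sequentially. M (restr n S) = Some Wle"
        unfolding eventually_sequentially Mr
      proof (intro exI[of _ N] allI impI)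
        fix n assume "N \<le> n" then show "(if cnd n S then Some Wle else Some Wge) = Some Wle" using cN by simp
      qed
      then show ?thesis using True unfolding K3_def by blast
    next
      case False
      then have F: "iso S Wge" "\<exists>f::nat\<Rightarrow>nat. bij f \<and> (\<forall>x y. S 0 [x,y] \<longleftrightarrow> f y \<le> f x)" using K3_LD[OF S] by blast+
      then obtain f :: "nat \<Rightarrow> nat" where f: "bij f" "\<forall>x y. S 0 [x,y] \<longleftrightarrow> f y \<le> f x" by blast
      have sur: "\<And>y. f (inv f y) = y" using f(1) bij_is_surj surj_f_inv_f by metis
      define x1 where "x1 = inv f 0"
      define w where "w z = inv f (Suc (f z))" for z
      define N where "N = Max (insert x1 (w ` {..x1}))"
      have Nx: "x1 \<le> N" unfolding N_def by simp
      have Nw: "z \<le> x1 \<Longrightarrow> w z \<le> N" for z unfolding N_def by (rule Max_ge) auto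
      have cN: "\<not> cnd s S" if s: "N \<le> s" for s
      proof
        assume "cnd s S"
        then obtain x where x: "x \<le> s" "\<forall>y\<le>s. S 0 [x,y]" "\<forall>z<x. \<not> (\<forall>y\<le>s. S 0 [y,z])"
          unfolding cnd_def by blast
        show False
        proof (cases "x \<le> x1")
          case True
          then have "w x \<le> s" using Nw s by (meson le_trans)
          then have "S 0 [x, w x]" using x(2) by blast
          then have "f (w x) \<le> f x" using f(2) by blast
          then show False using sur unfolding w_def by simp
        next
          case False
          then have "\<not> (\<forall>y\<le>s. S 0 [y,x1])" using x(3) by simp
          moreover have "\<forall>y\<le>s. S 0 [y,x1]" using f(2) sur unfolding x1_def by simp
          ultimately show False by blast
        qed
      qed
      have "\<forall>\<^sub>F n in sequentially. M (restr n S) = Some Wge"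
        unfolding eventually_sequentially Mr
      proof (intro exI[of _ N] allI impI)
        fix n assume "N \<le> n" then show "(if cnd n S then Some Wle else Some Wge) = Some Wge" using cN by simp
      qed
      then show ?thesis using F(1) unfolding K3_def by blast
    qed
  qed
  then show ?thesis unfolding Ex_learnable_def by blast
qed

lemma K3_not_nUs: "\<not> nUs_learnable [2] K3"
proof
  assume "nUs_learnable [2] K3"
  then obtain M where MM: "Ex_learns [2] K3 M \<and> (\<forall>S\<in>LD [2] K3. \<forall>A\<in>K3. iso S A \<longrightarrow>
        (\<forall>n m. n \<le> m \<longrightarrow> M (restr n S) = Some A \<longrightarrow> M (restr m S) = Some A))"
    unfolding nUs_learnable_def by (rule exE)
  have d1: "\<forall>S k. iso S Wle \<longrightarrow> (\<exists>T. iso T Wge \<and> restr k T = restr k S)"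
    using K3_dens by blast
  have d2: "\<forall>S k. iso S Wge \<longrightarrow> (\<exists>T. iso T Wle \<and> restr k T = restr k S)"
    using K3_dens by blast
  show False
    using MD[OF K3_family conjunct1[OF MM] conjunct2[OF MM] _ _ Wle_ne_Wge d1 d2] unfolding K3_def by simp
qed


theorem mainTheorem12:
  shows "(learn_lt co_learnable nUs_learnable \<and> learn_lt_fin co_learnable nUs_learnable)
    \<and> (learn_lt nUs_learnable Erange_learnable \<and> learn_eq_fin nUs_learnable Erange_learnable)
    \<and> (learn_lt_fin nUs_learnable Ex_learnable \<and> learn_lt nUs_learnable Ex_learnable)"
proof -
  have co1: "learn_le co_learnable nUs_learnable"
    unfolding learn_le_def using co_imp_nUs by blast
  have co2: "learn_le_fin co_learnable nUs_learnable"
    unfolding learn_le_fin_def using co_imp_nUs by blast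
  have fK1: "finite K1" unfolding K1_def by simp
  have co3: "\<not> learn_le nUs_learnable co_learnable"
    unfolding learn_le_def using K1_family K1_nUs K1_not_co by blast
  have co4: "\<not> learn_le_fin nUs_learnable co_learnable"
    unfolding learn_le_fin_def using K1_family fK1 K1_nUs K1_not_co by blast
  have nE: "nUs_learnable sig K \<Longrightarrow> Ex_learnable sig K" for sig K
    unfolding nUs_learnable_def Ex_learnable_def by blast
  have er1: "learn_le nUs_learnable Erange_learnable"
    unfolding learn_le_def using nUs_imp_Erange by blast
  have er2: "learn_le_fin nUs_learnable Erange_learnable"
    unfolding learn_le_fin_def using nUs_imp_Erange by blast
  have er3: "learn_le_fin Erange_learnable nUs_learnable"
    unfolding learn_le_fin_def using Erange_fin_imp_nUs by blast
  have K2n: "\<not> nUs_learnable [1] K2" using nE K2_not_Ex by blast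
  have er4: "\<not> learn_le Erange_learnable nUs_learnable"
    unfolding learn_le_def using K2_family K2_Erange K2n by blast
  have fK3: "finite K3" unfolding K3_def by simp
  have ex1: "learn_le nUs_learnable Ex_learnable"
    unfolding learn_le_def using nE by blast
  have ex2: "learn_le_fin nUs_learnable Ex_learnable"
    unfolding learn_le_fin_def using nE by blast
  have ex3: "\<not> learn_le Ex_learnable nUs_learnable"
    unfolding learn_le_def using K3_family K3_Ex K3_not_nUs by blast
  have ex4: "\<not> learn_le_fin Ex_learnable nUs_learnable"
    unfolding learn_le_fin_def using K3_family fK3 K3_Ex K3_not_nUs by blast
  show ?thesis unfolding learn_lt_def learn_lt_fin_def learn_eq_fin_def
    using co1 co2 co3 co4 er1 er2 er3 er4 ex1 ex2 ex3 ex4 by blast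
qed

end
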